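(* Let $\beta,p$ be positive integers with $p\le\beta$. Then $$C(1,\beta,p)\ge\max\left\{\frac{C_{WWL}(\beta,p)}{2},\frac{p}{\beta}\right\}.$$
   Context: Memory cells are binary; cell-state vectors of $n$ cells lie in $\{0,1\}^n$. A code on $n$ cells consists, for each write $i\ge1$, of a real $R_i\ge0$, an encoder $\mathcal{E}_i:\{1,\ldots,\lfloor2^{nR_i}\rfloor\}\times\{0,1\}^n\to\{0,1\}^n$ and decoder $\mathcal{D}_i$ with $\mathcal{D}_i(\mathcal{E}_i(m,\mathbf{u}))=m$ (both may depend on $i$). Starting from $\mathbf{v}_0=\mathbf{0}$, messages produce states $\mathbf{v}_i=\mathcal{E}_i(m_i,\mathbf{v}_{i-1})$. The code is $(\alpha,\beta,p)$-constrained if for every message sequence, every $i\ge0$ and every $1\le j\le n-\beta+1$, $|\{(k,\ell): v_{i+k,j+\ell}\ne v_{i+k+1,j+\ell}, 0\le k<\alpha, 0\le\ell<\beta\}|\le p$. Rate: $\lim_{m\to\infty}\frac1m\sum_{i=1}^mR_i$. $C_n(\alpha,\beta,p)$ is the supremum of rates of $(\alpha,\beta,p)$-constrained codes on $n$ cells and $C(\alpha,\beta,p)=\lim_{n\to\infty}C_n(\alpha,\beta,p)$. A binary vector is $(\beta,p)$-window-weight-limited (WWL) if every $\beta$ consecutive entries contain at most $p$ ones; with $\mathcal{S}_n(\beta,p)$ the set of such vectors of length $n$, $C_{WWL}(\beta,p)=\lim_{n\to\infty}\frac1n\log_2|\mathcal{S}_n(\beta,p)|$. *)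

theory Defs
  imports Complex_Main
begin

text \<open>Cell-state vectors of n binary cells are represented as bool lists of length n
  (True = 1, False = 0), indexed from 0.  Writes are indexed by i \<ge> 1.
  For write i, R i is the rate, E i the encoder (message, previous state) \<mapsto> new state,
  D i the decoder.\<close>

definition num_msgs :: "nat \<Rightarrow> real \<Rightarrow> nat" where
  "num_msgs n r = nat \<lfloor>(2::real) powr (real n * r)\<rfloor>"

definition is_code ::
  "nat \<Rightarrow> (nat \<Rightarrow> real) \<Rightarrow> (nat \<Rightarrow> nat \<Rightarrow> bool list \<Rightarrow> bool list)
     \<Rightarrow> (nat \<Rightarrow> bool list \<Rightarrow> nat) \<Rightarrow> bool" where
  "is_code n R E D \<longleftrightarrow>
     (\<forall>i\<ge>1. R i \<ge> 0 \<and>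
        (\<forall>m u. m \<in> {1..num_msgs n (R i)} \<and> length u = n \<longrightarrow>
             length (E i m u) = n \<and> D i (E i m u) = m))"

primrec states ::
  "nat \<Rightarrow> (nat \<Rightarrow> nat \<Rightarrow> bool list \<Rightarrow> bool list) \<Rightarrow> (nat \<Rightarrow> nat) \<Rightarrow> nat \<Rightarrow> bool list" where
  "states n E msg 0 = replicate n False"
| "states n E msg (Suc i) = E (Suc i) (msg (Suc i)) (states n E msg i)"

definition valid_msgs :: "nat \<Rightarrow> (nat \<Rightarrow> real) \<Rightarrow> (nat \<Rightarrow> nat) \<Rightarrow> bool" where
  "valid_msgs n R msg \<longleftrightarrow> (\<forall>i\<ge>1. msg i \<in> {1..num_msgs n (R i)})"

definition constrained ::
  "nat \<Rightarrow> nat \<Rightarrow> nat \<Rightarrow> nat \<Rightarrow> (nat \<Rightarrow> real) \<Rightarrow> (nat \<Rightarrow> nat \<Rightarrow> bool list \<Rightarrow> bool list) \<Rightarrow> bool" where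
  "constrained n \<alpha> \<beta> p R E \<longleftrightarrow>
     (\<forall>msg. valid_msgs n R msg \<longrightarrow>
        (\<forall>i j. j + \<beta> \<le> n \<longrightarrow>
           card {(k, l). k < \<alpha> \<and> l < \<beta> \<and>
                 states n E msg (i + k) ! (j + l) \<noteq> states n E msg (i + k + 1) ! (j + l)} \<le> p))"

definition has_rate :: "(nat \<Rightarrow> real) \<Rightarrow> real \<Rightarrow> bool" where
  "has_rate R r \<longleftrightarrow> (\<lambda>m. (\<Sum>i=1..m. R i) / real m) \<longlonglongrightarrow> r"

definition C_n :: "nat \<Rightarrow> nat \<Rightarrow> nat \<Rightarrow> nat \<Rightarrow> real" where
  "C_n n \<alpha> \<beta> p = Sup {r. \<exists>R E D. is_code n R E D \<and> constrained n \<alpha> \<beta> p R E \<and> has_rate R r}"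

definition C :: "nat \<Rightarrow> nat \<Rightarrow> nat \<Rightarrow> real" where
  "C \<alpha> \<beta> p = lim (\<lambda>n. C_n n \<alpha> \<beta> p)"

definition WWL_set :: "nat \<Rightarrow> nat \<Rightarrow> nat \<Rightarrow> bool list set" where
  "WWL_set n \<beta> p = {x. length x = n \<and>
      (\<forall>j. j + \<beta> \<le> n \<longrightarrow> length (filter id (take \<beta> (drop j x))) \<le> p)}"

definition C_WWL :: "nat \<Rightarrow> nat \<Rightarrow> real" where
  "C_WWL \<beta> p = lim (\<lambda>n. log 2 (real (card (WWL_set n \<beta> p))) / real n)"

end

theory Submission
  imports Defs
begin


lemma fekete_aux:
  fixes a :: "nat \<Rightarrow> real"
  assumes sub: "\<And>m n. a (m + n) \<le> a m + a n"
  shows "a (q * m + r) \<le> real q * a m + a r"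
proof (induction q)
  case 0 then show ?case by simp
next
  case (Suc q)
  have "a (Suc q * m + r) = a (m + (q * m + r))" by (simp add: algebra_simps)
  also have "\<dots> \<le> a m + a (q*m+r)" by (rule sub)
  also have "\<dots> \<le> a m + (real q * a m + a r)" using Suc by simp
  finally show ?case by (simp add: algebra_simps)
qed

lemma fekete:
  fixes a :: "nat \<Rightarrow> real"
  assumes sub: "\<And>m n. a (m + n) \<le> a m + a n" and nn: "\<And>n. a n \<ge> 0"
  shows "convergent (\<lambda>n. a n / real n)"
proof -
  define S where "S = (\<lambda>n. a n / real n) ` {1..}"
  define L where "L = Inf S"
  have bdd: "bdd_below S" unfolding S_def using nn by (intro bdd_belowI[of _ 0]) auto
  have ne: "S \<noteq> {}" unfolding S_def by auto
  have low: "L \<le> a n / real n" if "n \<ge> 1" for n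
    unfolding L_def by (rule cInf_lower[OF _ bdd]) (use that in \<open>auto simp: S_def\<close>)
  have "(\<lambda>n. a n / real n) \<longlonglongrightarrow> L"
  proof (rule LIMSEQ_I)
    fix e :: real assume e: "e > 0"
    have "L < L + e/2" using e by simp
    then obtain x where "x \<in> S" "x < L + e/2" unfolding L_def using cInf_lessD[OF ne] by blast
    then obtain m where m: "m \<ge> 1" "a m / real m < L + e/2" unfolding S_def by auto
    define K where "K = (\<Sum>r<m. a r)"
    have K: "a r \<le> K" if "r < m" for r
      unfolding K_def by (rule member_le_sum) (use that nn in auto)
    have K0: "K \<ge> 0" unfolding K_def using nn by (simp add: sum_nonneg)
    obtain N0 :: nat where N0: "N0 > 2 * K / e" using reals_Archimedean2 by blast
    show "\<exists>no. \<forall>n\<ge>no. norm (a n / real n - L) < e"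
    proof (intro exI[of _ "max 1 N0"] allI impI)
      fix n assume n: "max 1 N0 \<le> n"
      hence n1: "n \<ge> 1" and nN: "real n \<ge> N0" by auto
      define q where "q = n div m"
      define r where "r = n mod m"
      have nqr: "n = q * m + r" unfolding q_def r_def by simp
      have rm: "r < m" unfolding r_def using m by simp
      have "a n \<le> real q * a m + a r" using fekete_aux[of a q m r, OF sub] nqr by simp
      also have "\<dots> \<le> real q * a m + K" using K[OF rm] by simp
      finally have an: "a n \<le> real q * a m + K" .
      have qm: "real q * real m \<le> real n" using nqr by (metis le_add1 of_nat_le_iff of_nat_mult)
      have "real q * a m = (real q * real m) * (a m / real m)" using m by simp
      also have "\<dots> \<le> real n * (a m / real m)"
        using qm nn[of m] m by (intro mult_right_mono) auto
      finally have "a n \<le> real n * (a m / real m) + K" using an by simp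
      hence "a n / real n \<le> a m / real m + K / real n" using n1 by (simp add: field_simps)
      moreover have "K / real n < e/2"
      proof -
        have "2*K/e < real n" using N0 nN by linarith
        thus ?thesis using e n1 by (simp add: field_simps)
      qed
      ultimately have "a n / real n < L + e" using m by linarith
      moreover have "L \<le> a n / real n" using low n1 by simp
      ultimately show "norm (a n / real n - L) < e" by simp
    qed
  qed
  thus ?thesis by (auto simp: convergent_def)
qed

lemma WWL_finite: "finite (WWL_set n \<beta> p)"
proof -
  have "WWL_set n \<beta> p \<subseteq> {xs. set xs \<subseteq> (UNIV::bool set) \<and> length xs = n}" unfolding WWL_set_def by auto
  moreover have "finite {xs. set xs \<subseteq> (UNIV::bool set) \<and> length xs = n}"
    by (rule finite_lists_length_eq) simp
  ultimately show ?thesis by (rule finite_subset)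
qed

lemma WWL_nonempty: "replicate n False \<in> WWL_set n \<beta> p"
  unfolding WWL_set_def by (simp add: take_replicate drop_replicate)

lemma WWL_card_pos: "card (WWL_set n \<beta> p) \<ge> 1"
  using WWL_finite WWL_nonempty by (metis One_nat_def Suc_leI card_gt_0_iff empty_iff)

lemma WWL_take: assumes x: "x \<in> WWL_set (m+n) \<beta> p" shows "take m x \<in> WWL_set m \<beta> p"
proof -
  have lx: "length x = m + n" and w: "\<And>j. j + \<beta> \<le> m + n \<Longrightarrow> length (filter id (take \<beta> (drop j x))) \<le> p"
    using x unfolding WWL_set_def by auto
  have "length (filter id (take \<beta> (drop j (take m x)))) \<le> p" if jm: "j + \<beta> \<le> m" for j
  proof -
    have "take \<beta> (drop j (take m x)) = take \<beta> (drop j x)"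
      using jm by (simp add: drop_take min_def)
    thus ?thesis using w[of j] jm by simp
  qed
  thus ?thesis unfolding WWL_set_def using lx by simp
qed

lemma WWL_drop: assumes x: "x \<in> WWL_set (m+n) \<beta> p" shows "drop m x \<in> WWL_set n \<beta> p"
proof -
  have lx: "length x = m + n" and w: "\<And>j. j + \<beta> \<le> m + n \<Longrightarrow> length (filter id (take \<beta> (drop j x))) \<le> p"
    using x unfolding WWL_set_def by auto
  have "length (filter id (take \<beta> (drop j (drop m x)))) \<le> p" if jm: "j + \<beta> \<le> n" for j
    using w[of "m+j"] jm by (simp add: add.commute)
  thus ?thesis unfolding WWL_set_def using lx by simp
qed

lemma WWL_sub: "card (WWL_set (m+n) \<beta> p) \<le> card (WWL_set m \<beta> p) * card (WWL_set n \<beta> p)"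
proof -
  have inj: "inj_on (\<lambda>x. (take m x, drop m x)) (WWL_set (m+n) \<beta> p)"
    by (intro inj_onI) (metis append_take_drop_id prod.inject)
  have img: "(\<lambda>x. (take m x, drop m x)) ` WWL_set (m+n) \<beta> p \<subseteq> WWL_set m \<beta> p \<times> WWL_set n \<beta> p"
    using WWL_take WWL_drop by blast
  have "card (WWL_set (m+n) \<beta> p) \<le> card (WWL_set m \<beta> p \<times> WWL_set n \<beta> p)"
    using card_inj_on_le[OF inj img] WWL_finite by (simp add: finite_cartesian_product)
  thus ?thesis by (simp add: card_cartesian_product)
qed

lemma WWL_conv: "(\<lambda>n. log 2 (real (card (WWL_set n \<beta> p))) / real n) \<longlonglongrightarrow> C_WWL \<beta> p"
proof -
  let ?a = "\<lambda>n. log 2 (real (card (WWL_set n \<beta> p)))"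
  have pos: "real (card (WWL_set n \<beta> p)) > 0" for n using WWL_card_pos[of n \<beta> p] by simp
  have "convergent (\<lambda>n. ?a n / real n)"
  proof (rule fekete)
    fix m n
    have "?a (m+n) \<le> log 2 (real (card (WWL_set m \<beta> p)) * real (card (WWL_set n \<beta> p)))"
      using WWL_sub[of m n \<beta> p] pos by (subst log_le_cancel_iff) (auto simp flip: of_nat_mult)
    also have "\<dots> = ?a m + ?a n" using pos by (simp add: log_mult)
    finally show "?a (m+n) \<le> ?a m + ?a n" .
  next
    fix n show "?a n \<ge> 0" using WWL_card_pos[of n \<beta> p] by simp
  qed
  thus ?thesis unfolding C_WWL_def by (simp add: convergent_LIMSEQ_iff)
qed


locale wl = fixes \<beta> p :: nat assumes bpos: "0 < \<beta>"
begin

definition dec :: "nat \<Rightarrow> (nat\<Rightarrow>nat) \<Rightarrow> (nat \<Rightarrow> nat \<Rightarrow> bool list \<Rightarrow> bool list) \<Rightarrow> (nat \<Rightarrow> bool list \<Rightarrow> nat) \<Rightarrow> bool" where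
  "dec n M E D \<longleftrightarrow> (\<forall>i\<ge>1. \<forall>m u. m \<in> {1..M i} \<and> length u = n \<longrightarrow> length (E i m u) = n \<and> D i (E i m u) = m)"

definition vmsg :: "(nat\<Rightarrow>nat) \<Rightarrow> (nat \<Rightarrow> nat) \<Rightarrow> bool" where
  "vmsg M msg \<longleftrightarrow> (\<forall>i\<ge>1. msg i \<in> {1..M i})"

definition wcnt :: "nat \<Rightarrow> bool list \<Rightarrow> bool list \<Rightarrow> nat \<Rightarrow> nat" where
  "wcnt n x y j = card {l. l < \<beta> \<and> j + l < n \<and> x ! (j+l) \<noteq> y ! (j+l)}"

definition scon :: "nat \<Rightarrow> (nat\<Rightarrow>nat) \<Rightarrow> (nat \<Rightarrow> nat \<Rightarrow> bool list \<Rightarrow> bool list) \<Rightarrow> bool" where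
  "scon n M E \<longleftrightarrow> (\<forall>msg. vmsg M msg \<longrightarrow> (\<forall>i j. wcnt n (states n E msg i) (states n E msg (Suc i)) j \<le> p))"

definition wcon :: "nat \<Rightarrow> (nat\<Rightarrow>nat) \<Rightarrow> (nat \<Rightarrow> nat \<Rightarrow> bool list \<Rightarrow> bool list) \<Rightarrow> bool" where
  "wcon n M E \<longleftrightarrow> (\<forall>msg. vmsg M msg \<longrightarrow> (\<forall>i j. j + \<beta> \<le> n \<longrightarrow> wcnt n (states n E msg i) (states n E msg (Suc i)) j \<le> p))"

definition sgood :: "nat \<Rightarrow> (nat\<Rightarrow>nat) \<Rightarrow> bool" where
  "sgood n M \<longleftrightarrow> (\<forall>i\<ge>1. M i \<ge> 1) \<and> (\<exists>E D. dec n M E D \<and> scon n M E)"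

abbreviation f :: "nat \<Rightarrow> real" where "f n \<equiv> C_n n 1 \<beta> p"

definition Cset :: "nat \<Rightarrow> real set" where
  "Cset n = {r. \<exists>R E D. is_code n R E D \<and> constrained n 1 \<beta> p R E \<and> has_rate R r}"

lemma f_def': "f n = Sup (Cset n)" unfolding C_n_def Cset_def ..

lemma states_len:
  assumes "dec n M E D" "vmsg M msg" shows "length (states n E msg i) = n"
proof (induction i)
  case 0 then show ?case by simp
next
  case (Suc i)
  have "msg (Suc i) \<in> {1..M (Suc i)}" using assms(2) unfolding vmsg_def by auto
  then show ?case using assms(1) Suc unfolding dec_def by simp
qed

lemma num_msgs_gt: assumes "r \<ge> 0" shows "real (num_msgs n r) > 2 powr (real n * r) - 1"
proof -
  have "real (num_msgs n r) = real_of_int \<lfloor>2 powr (real n * r)\<rfloor>"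
    unfolding num_msgs_def by (simp add: of_nat_int_floor)
  thus ?thesis by linarith
qed

lemma num_msgs_ge1: assumes "r \<ge> 0" shows "num_msgs n r \<ge> 1"
proof -
  have "2 powr (real n * r) \<ge> 1" using assms by (intro ge_one_powr_ge_zero) auto
  thus ?thesis unfolding num_msgs_def by (simp add: le_nat_floor)
qed

lemma num_msgs_le: "real (num_msgs n r) \<le> 2 powr (real n * r)"
  unfolding num_msgs_def by (simp add: of_nat_floor)

lemma code_R_le2:
  assumes n: "n \<ge> 1" and c: "is_code n R E D" and i: "i \<ge> 1"
  shows "R i \<le> 2"
proof -
  let ?M = "num_msgs n (R i)"
  have R0: "R i \<ge> 0" using c i unfolding is_code_def by auto
  have dec: "\<And>m. m \<in> {1..?M} \<Longrightarrow> length (E i m (replicate n False)) = n \<and> D i (E i m (replicate n False)) = m"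
    using c i unfolding is_code_def by auto
  have inj: "inj_on (\<lambda>m. E i m (replicate n False)) {1..?M}"
    by (intro inj_onI) (metis dec)
  have img: "(\<lambda>m. E i m (replicate n False)) ` {1..?M} \<subseteq> {xs. set xs \<subseteq> (UNIV::bool set) \<and> length xs = n}"
    using dec by auto
  have "card {1..?M} \<le> card {xs. set xs \<subseteq> (UNIV::bool set) \<and> length xs = n}"
    by (rule card_inj_on_le[OF inj img]) (rule finite_lists_length_eq, simp)
  hence Mle: "?M \<le> 2 ^ n" using card_lists_length_eq[of "UNIV::bool set" n] by simp
  have "2 powr (real n * R i) < real ?M + 1" using num_msgs_gt[OF R0, of n] by simp
  also have "\<dots> \<le> 2 ^ n + 1" using Mle by (simp add: of_nat_le_iff[symmetric])
  also have "\<dots> \<le> 2 ^ (n+1)" by (simp add: one_le_power)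
  also have "\<dots> = 2 powr (real n + 1)" by (simp add: powr_add powr_realpow)
  finally have "real n * R i < real n + 1" by simp
  hence "R i < 1 + 1 / real n" using n by (simp add: field_simps)
  moreover have "1 / real n \<le> 1" using n by simp
  ultimately show ?thesis by linarith
qed

lemma rate_le2:
  assumes n: "n \<ge> 1" and c: "is_code n R E D" and h: "has_rate R r" shows "r \<le> 2"
proof (rule LIMSEQ_le_const2[OF h[unfolded has_rate_def]])
  show "\<exists>N. \<forall>m\<ge>N. (\<Sum>i = 1..m. R i) / real m \<le> 2"
  proof (intro exI[of _ 1] allI impI)
    fix m :: nat assume m: "m \<ge> 1"
    have "(\<Sum>i = 1..m. R i) \<le> (\<Sum>i = 1..m. 2)" by (rule sum_mono) (use code_R_le2[OF n c] in auto)
    hence "(\<Sum>i = 1..m. R i) \<le> 2 * real m" by simp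
    thus "(\<Sum>i = 1..m. R i) / real m \<le> 2" using m by (simp add: field_simps)
  qed
qed

lemma Cset_bdd: assumes n: "n \<ge> 1" shows "bdd_above (Cset n)"
proof (rule bdd_aboveI[where M=2])
  fix x assume "x \<in> Cset n"
  then obtain R E D where "is_code n R E D" "has_rate R x" unfolding Cset_def by blast
  thus "x \<le> 2" using rate_le2[OF n] by blast
qed

lemma zero_in_Cset: "0 \<in> Cset n"
proof -
  define E :: "nat \<Rightarrow> nat \<Rightarrow> bool list \<Rightarrow> bool list" where "E = (\<lambda>i m u. u)"
  have ic: "is_code n (\<lambda>_. 0) E (\<lambda>_ _. 1)" unfolding is_code_def E_def num_msgs_def by simp
  have st: "states n E msg i = replicate n False" for msg i by (induction i) (auto simp: E_def)
  have co: "constrained n 1 \<beta> p (\<lambda>_. 0) E" unfolding constrained_def st by simp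
  have hr: "has_rate (\<lambda>_. 0) 0" unfolding has_rate_def by simp
  show ?thesis unfolding Cset_def using ic co hr by blast
qed

lemma f_ge0: "n \<ge> 1 \<Longrightarrow> 0 \<le> f n"
  unfolding f_def' using zero_in_Cset Cset_bdd by (meson cSup_upper)

lemma f_le2: "n \<ge> 1 \<Longrightarrow> f n \<le> 2"
  unfolding f_def' using zero_in_Cset rate_le2 by (intro cSup_least) (auto simp: Cset_def, blast)

lemma card_win:
  fixes s :: "nat \<Rightarrow> bool list"
  assumes "j + \<beta> \<le> n"
  shows "card {(k, l). k < (1::nat) \<and> l < \<beta> \<and> s (i + k) ! (j + l) \<noteq> s (i + k + 1) ! (j + l)}
       = wcnt n (s i) (s (Suc i)) j"
proof -
  have "{(k, l). k < (1::nat) \<and> l < \<beta> \<and> s (i + k) ! (j + l) \<noteq> s (i + k + 1) ! (j + l)}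
      = Pair 0 ` {l. l < \<beta> \<and> j + l < n \<and> s i ! (j+l) \<noteq> s (Suc i) ! (j+l)}"
    using assms by auto
  thus ?thesis unfolding wcnt_def by (simp add: card_image inj_on_def)
qed

lemma link1:
  assumes n: "n \<ge> 1" and d: "dec n M E D" and w: "wcon n M E"
    and R: "\<And>i. i \<ge> 1 \<Longrightarrow> 0 \<le> R i \<and> num_msgs n (R i) \<le> M i" and h: "has_rate R r"
  shows "r \<le> f n"
proof -
  have ic: "is_code n R E D" unfolding is_code_def
  proof (intro allI impI conjI)
    fix i :: nat assume i: "i \<ge> 1"
    show "0 \<le> R i" using R[OF i] by simp
    fix m and u :: "bool list" assume "m \<in> {1..num_msgs n (R i)} \<and> length u = n"
    hence "m \<in> {1..M i}" "length u = n" using R[OF i] by auto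
    thus "length (E i m u) = n" "D i (E i m u) = m" using d i unfolding dec_def by auto
  qed
  have co: "constrained n 1 \<beta> p R E" unfolding constrained_def
  proof (intro allI impI)
    fix msg i j assume vm: "valid_msgs n R msg" and j: "j + \<beta> \<le> n"
    have "vmsg M msg" using vm R unfolding valid_msgs_def vmsg_def by (meson atLeastAtMost_iff le_trans)
    thus "card {(k, l). k < 1 \<and> l < \<beta> \<and> states n E msg (i + k) ! (j + l) \<noteq> states n E msg (i + k + 1) ! (j + l)} \<le> p"
      using w j unfolding wcon_def by (subst card_win[OF j]) auto
  qed
  have "r \<in> Cset n" unfolding Cset_def using ic co h by blast
  thus ?thesis unfolding f_def' using Cset_bdd[OF n] by (rule cSup_upper)
qed

lemma link2:
  assumes n: "n \<ge> 1" and r: "r < f n"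
  shows "\<exists>R E D r'. r < r' \<and> is_code n R E D \<and> constrained n 1 \<beta> p R E \<and> has_rate R r'"
proof -
  have "\<exists>x\<in>Cset n. r < x" using r unfolding f_def'
    using less_cSup_iff[OF _ Cset_bdd[OF n]] zero_in_Cset by blast
  thus ?thesis unfolding Cset_def by blast
qed

lemma code_dec: "is_code n R E D \<Longrightarrow> dec n (\<lambda>i. num_msgs n (R i)) E D"
  unfolding is_code_def dec_def by auto

lemma code_wcon: assumes c: "constrained n 1 \<beta> p R E" shows "wcon n (\<lambda>i. num_msgs n (R i)) E"
  unfolding wcon_def
proof (intro allI impI)
  fix msg i j assume v: "vmsg (\<lambda>i. num_msgs n (R i)) msg" and j: "j + \<beta> \<le> n"
  from v have "valid_msgs n R msg" unfolding vmsg_def valid_msgs_def by auto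
  hence "card {(k, l). k < (1::nat) \<and> l < \<beta> \<and> states n E msg (i + k) ! (j + l) \<noteq> states n E msg (i + k + 1) ! (j + l)} \<le> p"
    using c j unfolding constrained_def by blast
  thus "wcnt n (states n E msg i) (states n E msg (Suc i)) j \<le> p"
    using card_win[OF j, of "states n E msg" i] by simp
qed

lemma wcnt_shift:
  assumes "n \<ge> \<beta>" "j + \<beta> > n" shows "wcnt n x y j \<le> wcnt n x y (n - \<beta>)"
  unfolding wcnt_def
proof (rule card_inj_on_le)
  show "inj_on (\<lambda>l. l + j - (n - \<beta>)) {l. l < \<beta> \<and> j + l < n \<and> x ! (j + l) \<noteq> y ! (j + l)}"
    using assms by (intro inj_onI) auto
  show "(\<lambda>l. l + j - (n - \<beta>)) ` {l. l < \<beta> \<and> j + l < n \<and> x ! (j + l) \<noteq> y ! (j + l)}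
      \<subseteq> {l. l < \<beta> \<and> n - \<beta> + l < n \<and> x ! (n - \<beta> + l) \<noteq> y ! (n - \<beta> + l)}"
  proof
    fix z assume "z \<in> (\<lambda>l. l + j - (n - \<beta>)) ` {l. l < \<beta> \<and> j + l < n \<and> x ! (j + l) \<noteq> y ! (j + l)}"
    then obtain l where z: "z = l + j - (n - \<beta>)" and l: "l < \<beta>" "j + l < n" "x ! (j + l) \<noteq> y ! (j + l)" by blast
    have e: "n - \<beta> + z = j + l" using assms z by auto
    have "z < \<beta>" using assms z l by auto
    thus "z \<in> {l. l < \<beta> \<and> n - \<beta> + l < n \<and> x ! (n - \<beta> + l) \<noteq> y ! (n - \<beta> + l)}"
      using e l by simp
  qed
qed auto

lemma wcon_scon: assumes "n \<ge> \<beta>" "wcon n M E" shows "scon n M E"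
  unfolding scon_def
proof (intro allI impI)
  fix msg i j assume vm: "vmsg M msg"
  show "wcnt n (states n E msg i) (states n E msg (Suc i)) j \<le> p"
  proof (cases "j + \<beta> \<le> n")
    case True then show ?thesis using assms vm unfolding wcon_def by auto
  next
    case False
    hence "wcnt n (states n E msg i) (states n E msg (Suc i)) j \<le> wcnt n (states n E msg i) (states n E msg (Suc i)) (n - \<beta>)"
      using assms by (intro wcnt_shift) auto
    also have "\<dots> \<le> p" using assms vm unfolding wcon_def by auto
    finally show ?thesis .
  qed
qed

lemma scon_wcon: "scon n M E \<Longrightarrow> wcon n M E"
  unfolding scon_def wcon_def by auto

end


context wl begin

lemma fin_win: "finite {l. l < \<beta> \<and> P l}"
  by (rule finite_subset[of _ "{..<\<beta>}"]) auto

lemma nth_cat: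
  assumes "length xa = a" "q < a + \<beta> + b"
  shows "(xa @ replicate \<beta> False @ xb) ! q = (if q < a then xa ! q else if q < a + \<beta> then False else xb ! (q - a - \<beta>))"
  using assms by (auto simp: nth_append)

lemma wcnt_concat:
  assumes la: "length xa = a" "length ya = a" and lb: "length xb = b" "length yb = b"
    and A: "\<And>j. wcnt a xa ya j \<le> p" and B: "\<And>j. wcnt b xb yb j \<le> p"
  shows "wcnt (a+\<beta>+b) (xa @ replicate \<beta> False @ xb) (ya @ replicate \<beta> False @ yb) j \<le> p"
proof -
  let ?X = "xa @ replicate \<beta> False @ xb" and ?Y = "ya @ replicate \<beta> False @ yb"
  let ?W = "{l. l < \<beta> \<and> j + l < a+\<beta>+b \<and> ?X ! (j+l) \<noteq> ?Y ! (j+l)}"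
  have nX: "\<And>q. q < a+\<beta>+b \<Longrightarrow> ?X ! q = (if q < a then xa ! q else if q < a + \<beta> then False else xb ! (q - a - \<beta>))"
    using nth_cat[OF la(1)] by blast
  have nY: "\<And>q. q < a+\<beta>+b \<Longrightarrow> ?Y ! q = (if q < a then ya ! q else if q < a + \<beta> then False else yb ! (q - a - \<beta>))"
    using nth_cat[OF la(2)] by blast
  have "card ?W \<le> p"
  proof (cases "j \<le> a")
    case True
    have "?W \<subseteq> {l. l < \<beta> \<and> j + l < a \<and> xa ! (j+l) \<noteq> ya ! (j+l)}"
    proof
      fix l assume l: "l \<in> ?W"
      hence l1: "l < \<beta>" "j + l < a+\<beta>+b" "?X ! (j+l) \<noteq> ?Y ! (j+l)" by auto
      have "j + l < a"
      proof (rule ccontr)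
        assume "\<not> j + l < a"
        hence "?X ! (j+l) = ?Y ! (j+l)" using nX[OF l1(2)] nY[OF l1(2)] True l1(1) by auto
        thus False using l1(3) by simp
      qed
      thus "l \<in> {l. l < \<beta> \<and> j + l < a \<and> xa ! (j+l) \<noteq> ya ! (j+l)}"
        using l1 nX[OF l1(2)] nY[OF l1(2)] by auto
    qed
    hence "card ?W \<le> wcnt a xa ya j" unfolding wcnt_def by (intro card_mono fin_win)
    thus ?thesis using A[of j] by simp
  next
    case False
    have pos: "l \<in> ?W \<Longrightarrow> j + l \<ge> a + \<beta> \<and> xb ! (j + l - (a + \<beta>)) \<noteq> yb ! (j + l - (a + \<beta>)) \<and> j + l - (a + \<beta>) < b" for l
    proof -
      assume l: "l \<in> ?W"
      hence l1: "l < \<beta>" "j + l < a+\<beta>+b" "?X ! (j+l) \<noteq> ?Y ! (j+l)" by auto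
      have "j + l \<ge> a + \<beta>"
      proof (rule ccontr)
        assume "\<not> j + l \<ge> a + \<beta>"
        hence "?X ! (j+l) = ?Y ! (j+l)" using nX[OF l1(2)] nY[OF l1(2)] False by auto
        thus False using l1(3) by simp
      qed
      thus ?thesis using l1 nX[OF l1(2)] nY[OF l1(2)] by auto
    qed
    show ?thesis
    proof (cases "j \<ge> a + \<beta>")
      case True
      have "?W \<subseteq> {l. l < \<beta> \<and> (j - (a+\<beta>)) + l < b \<and> xb ! ((j - (a+\<beta>)) + l) \<noteq> yb ! ((j - (a+\<beta>)) + l)}"
      proof
        fix l assume l: "l \<in> ?W"
        have e: "j - (a+\<beta>) + l = j + l - (a + \<beta>)" using True by simp
        show "l \<in> {l. l < \<beta> \<and> (j - (a+\<beta>)) + l < b \<and> xb ! ((j - (a+\<beta>)) + l) \<noteq> yb ! ((j - (a+\<beta>)) + l)}"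
          using pos[OF l] l by (simp only: e mem_Collect_eq) simp
      qed
      hence "card ?W \<le> wcnt b xb yb (j - (a+\<beta>))" unfolding wcnt_def by (intro card_mono fin_win)
      thus ?thesis using B by (meson le_trans)
    next
      case F2: False
      have "card ?W \<le> wcnt b xb yb 0" unfolding wcnt_def
      proof (rule card_inj_on_le)
        show "inj_on (\<lambda>l. j + l - (a + \<beta>)) ?W"
        proof (intro inj_onI)
          fix x y assume "x \<in> ?W" "y \<in> ?W" "j + x - (a + \<beta>) = j + y - (a + \<beta>)"
          thus "x = y" using pos[of x] pos[of y] by linarith
        qed
        show "(\<lambda>l. j + l - (a + \<beta>)) ` ?W \<subseteq> {l. l < \<beta> \<and> 0 + l < b \<and> xb ! (0 + l) \<noteq> yb ! (0 + l)}"
        proof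
          fix z assume "z \<in> (\<lambda>l. j + l - (a + \<beta>)) ` ?W"
          then obtain l where z: "z = j + l - (a + \<beta>)" and l: "l \<in> ?W" by blast
          have "l < \<beta>" using l by simp
          hence "z < \<beta>" using z F2 by linarith
          thus "z \<in> {l. l < \<beta> \<and> 0 + l < b \<and> xb ! (0 + l) \<noteq> yb ! (0 + l)}" using pos[OF l] z by simp
        qed
      qed (rule fin_win)
      thus ?thesis using B[of 0] by simp
    qed
  qed
  thus ?thesis unfolding wcnt_def .
qed

lemma prod_good:
  assumes A: "sgood a MA" and B: "sgood b MB"
  shows "sgood (a+\<beta>+b) (\<lambda>i. MA i * MB i)"
proof -
  obtain EA DA where MA1: "\<And>i. i \<ge> 1 \<Longrightarrow> MA i \<ge> 1" and dA: "dec a MA EA DA" and cA: "scon a MA EA"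
    using A unfolding sgood_def by blast
  obtain EB DB where MB1: "\<And>i. i \<ge> 1 \<Longrightarrow> MB i \<ge> 1" and dB: "dec b MB EB DB" and cB: "scon b MB EB"
    using B unfolding sgood_def by blast
  define fs where "fs = (\<lambda>i m. (m - 1) div MB i + 1)"
  define sn where "sn = (\<lambda>i m. (m - 1) mod MB i + 1)"
  define E where "E = (\<lambda>i m u. EA i (fs i m) (take a u) @ replicate \<beta> False @ EB i (sn i m) (drop (a+\<beta>) u))"
  define D where "D = (\<lambda>i x. (DA i (take a x) - 1) * MB i + DB i (drop (a+\<beta>) x))"
  have rng: "fs i m \<in> {1..MA i} \<and> sn i m \<in> {1..MB i}" if i: "i \<ge> 1" and m: "m \<in> {1..MA i * MB i}" for i m
  proof -
    have mb: "MB i \<ge> 1" using MB1 i by simp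
    have "m - 1 < MA i * MB i" using m by auto
    hence "(m - 1) div MB i < MA i" using mb by (simp add: div_less_iff_less_mult)
    moreover have "(m - 1) mod MB i < MB i" using mb by simp
    ultimately show ?thesis unfolding fs_def sn_def by auto
  qed
  have dec: "dec (a+\<beta>+b) (\<lambda>i. MA i * MB i) E D" unfolding dec_def
  proof (intro allI impI conjI)
    fix i m and u :: "bool list" assume i: "i \<ge> 1" and mu: "m \<in> {1..MA i * MB i} \<and> length u = a + \<beta> + b"
    have r: "fs i m \<in> {1..MA i}" "sn i m \<in> {1..MB i}" using rng[OF i] mu by auto
    have la: "length (EA i (fs i m) (take a u)) = a" "DA i (EA i (fs i m) (take a u)) = fs i m"
      using dA i r(1) mu unfolding dec_def by auto
    have lb: "length (EB i (sn i m) (drop (a+\<beta>) u)) = b" "DB i (EB i (sn i m) (drop (a+\<beta>) u)) = sn i m"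
      using dB i r(2) mu unfolding dec_def by auto
    show "length (E i m u) = a + \<beta> + b" unfolding E_def using la lb by simp
    have "D i (E i m u) = (fs i m - 1) * MB i + sn i m" unfolding D_def E_def using la lb by simp
    also have "\<dots> = (m - 1) div MB i * MB i + (m - 1) mod MB i + 1" unfolding fs_def sn_def by (simp only: add_diff_cancel_right' add.assoc)
    also have "\<dots> = m - 1 + 1" by (simp only: div_mult_mod_eq)
    also have "\<dots> = m" using mu by auto
    finally show "D i (E i m u) = m" .
  qed
  have con: "scon (a+\<beta>+b) (\<lambda>i. MA i * MB i) E" unfolding scon_def
  proof (intro allI impI)
    fix msg i j assume vm: "vmsg (\<lambda>i. MA i * MB i) msg"
    define mA where "mA = (\<lambda>i. fs i (msg i))"
    define mB where "mB = (\<lambda>i. sn i (msg i))"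
    have vA: "vmsg MA mA" and vB: "vmsg MB mB" using vm rng unfolding vmsg_def mA_def mB_def by auto
    have st: "states (a+\<beta>+b) E msg k = states a EA mA k @ replicate \<beta> False @ states b EB mB k" for k
    proof (induction k)
      case 0 then show ?case by (simp add: replicate_add[symmetric] add.assoc)
    next
      case (Suc k)
      have l1: "length (states a EA mA k) = a" by (rule states_len[OF dA vA])
      show ?case using Suc l1 by (simp add: E_def mA_def mB_def)
    qed
    show "wcnt (a + \<beta> + b) (states (a + \<beta> + b) E msg i) (states (a + \<beta> + b) E msg (Suc i)) j \<le> p"
      unfolding st
      by (rule wcnt_concat[OF states_len[OF dA vA] states_len[OF dA vA] states_len[OF dB vB] states_len[OF dB vB]])
         (use cA vA cB vB in \<open>auto simp: scon_def\<close>)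
  qed
  have "\<forall>i\<ge>1. MA i * MB i \<ge> 1" using MA1 MB1 by (simp add: one_le_mult_iff)
  thus ?thesis unfolding sgood_def using dec con by blast
qed

lemma zero_good: "sgood r (\<lambda>_. 1)"
proof -
  define E :: "nat \<Rightarrow> nat \<Rightarrow> bool list \<Rightarrow> bool list" where "E = (\<lambda>i m u. replicate r False)"
  have d: "dec r (\<lambda>_. 1) E (\<lambda>_ _. 1)" unfolding dec_def E_def by auto
  have st: "states r E msg k = replicate r False" for msg k by (induction k) (auto simp: E_def)
  have c: "scon r (\<lambda>_. 1) E" unfolding scon_def wcnt_def st by simp
  show ?thesis unfolding sgood_def using d c by auto
qed

lemma iter_good:
  assumes A: "sgood n0 M" shows "k \<ge> 1 \<Longrightarrow> sgood (k*(n0+\<beta>) - \<beta>) (\<lambda>i. M i ^ k)"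
proof (induction k)
  case 0 then show ?case by simp
next
  case (Suc k)
  show ?case
  proof (cases "k = 0")
    case True then show ?thesis using A by simp
  next
    case False
    hence k: "k \<ge> 1" by simp
    have "sgood (n0 + \<beta> + (k*(n0+\<beta>) - \<beta>)) (\<lambda>i. M i * M i ^ k)"
      by (rule prod_good[OF A Suc.IH[OF k]])
    moreover have "n0 + \<beta> + (k*(n0+\<beta>) - \<beta>) = Suc k * (n0+\<beta>) - \<beta>"
    proof -
      have "k*(n0+\<beta>) \<ge> \<beta>" using k by (metis le_add2 mult_1 mult_le_mono1 order_trans)
      thus ?thesis by simp
    qed
    ultimately show ?thesis by simp
  qed
qed

lemma pad_good:
  assumes A: "sgood n0 M" and N: "N \<ge> n0 + \<beta>"
  shows "sgood N (\<lambda>i. M i ^ (N div (n0+\<beta>)))"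
proof -
  define k where "k = N div (n0+\<beta>)"
  define r where "r = N mod (n0+\<beta>)"
  have "(n0+\<beta>) div (n0+\<beta>) \<le> N div (n0+\<beta>)" by (rule div_le_mono[OF N])
  hence k: "k \<ge> 1" unfolding k_def using bpos by simp
  have "sgood (k*(n0+\<beta>) - \<beta> + \<beta> + r) (\<lambda>i. M i ^ k * 1)"
    by (rule prod_good[OF iter_good[OF A k] zero_good])
  moreover have "k*(n0+\<beta>) - \<beta> + \<beta> + r = N"
  proof -
    have "k*(n0+\<beta>) \<ge> \<beta>" using k by (metis le_add2 mult_1 mult_le_mono1 order_trans)
    thus ?thesis unfolding k_def r_def by (simp add: div_mult_mod_eq)
  qed
  ultimately show ?thesis unfolding k_def by simp
qed

end


lemma lindley:
  fixes t w :: "nat \<Rightarrow> real"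
  assumes t0: "\<And>i. i \<ge> 1 \<Longrightarrow> 0 \<le> t i" and wt: "\<And>i. i \<ge> 1 \<Longrightarrow> w i \<le> t i"
    and W: "(\<lambda>m. (\<Sum>i=1..m. w i) / real m) \<longlonglongrightarrow> \<tau>" and r0: "0 \<le> \<rho>" and rt: "\<rho> \<le> \<tau>"
  shows "\<exists>s. (\<forall>i\<ge>1. 0 \<le> s i \<and> s i \<le> t i) \<and> has_rate s \<rho>"
proof -
  define D :: "nat \<Rightarrow> real" where "D = rec_nat 0 (\<lambda>m d. max 0 (d + \<rho> - t (Suc m)))"
  have D0: "D 0 = 0" and DS: "\<And>m. D (Suc m) = max 0 (D m + \<rho> - t (Suc m))" unfolding D_def by simp_all
  have Dnn: "D m \<ge> 0" for m by (cases m) (simp_all add: D0 DS)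
  define s where "s = (\<lambda>i. D (i - 1) + \<rho> - D i)"
  have sb: "0 \<le> s i \<and> s i \<le> t i" if i1: "i \<ge> 1" for i
  proof -
    obtain m where i: "i = Suc m" using i1 by (cases i) auto
    have "t i \<ge> 0" using t0 i1 by simp
    thus ?thesis unfolding s_def i using Dnn[of m] r0 by (simp add: DS)
  qed
  have ssum: "(\<Sum>i=1..m. s i) = \<rho> * real m - D m" for m
  proof (induction m)
    case 0 then show ?case by (simp add: D0)
  next
    case (Suc m)
    have "(\<Sum>i=1..Suc m. s i) = (\<Sum>i=1..m. s i) + s (Suc m)" by simp
    thus ?case using Suc by (simp add: s_def algebra_simps)
  qed
  define Wm where "Wm = (\<lambda>m. \<Sum>i=1..m. w i)"
  have inv: "\<exists>j\<le>m. D m \<le> \<rho> * (real m - real j) - (Wm m - Wm j)" for m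
  proof (induction m)
    case 0 then show ?case by (auto simp: D0)
  next
    case (Suc m)
    then obtain j where j: "j \<le> m" "D m \<le> \<rho> * (real m - real j) - (Wm m - Wm j)" by blast
    show ?case
    proof (cases "D m + \<rho> - t (Suc m) \<le> 0")
      case True then show ?thesis by (intro exI[of _ "Suc m"]) (auto simp: DS)
    next
      case False
      hence "D (Suc m) = D m + \<rho> - t (Suc m)" by (simp add: DS)
      also have "\<dots> \<le> \<rho> * (real m - real j) - (Wm m - Wm j) + \<rho> - w (Suc m)" using j wt[of "Suc m"] by simp
      also have "\<dots> = \<rho> * (real (Suc m) - real j) - (Wm (Suc m) - Wm j)"
        by (simp add: Wm_def algebra_simps)
      finally show ?thesis using j by (intro exI[of _ j]) auto
    qed
  qed
  have Dlim: "(\<lambda>m. D m / real m) \<longlonglongrightarrow> 0"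
  proof (rule LIMSEQ_I)
    fix \<epsilon> :: real assume e: "\<epsilon> > 0"
    define e where "e = (\<lambda>l. Wm l - \<tau> * real l)"
    obtain L0 where L0: "\<And>l. l \<ge> L0 \<Longrightarrow> norm (Wm l / real l - \<tau>) < \<epsilon>/4"
      using LIMSEQ_D[OF W, of "\<epsilon>/4"] e unfolding Wm_def by auto
    define L1 where "L1 = max 1 L0"
    have eb1: "\<bar>e l\<bar> \<le> \<epsilon>/4 * real l" if "l \<ge> L1" for l
    proof -
      have l1: "real l \<ge> 1" using that unfolding L1_def by auto
      have "\<bar>Wm l / real l - \<tau>\<bar> < \<epsilon>/4" using L0[of l] that unfolding L1_def by auto
      hence "\<bar>(Wm l - \<tau> * real l) / real l\<bar> < \<epsilon>/4" using l1 by (simp add: diff_divide_distrib)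
      hence "\<bar>Wm l - \<tau> * real l\<bar> / real l < \<epsilon>/4" using l1 by simp
      thus ?thesis unfolding e_def using l1 by (simp add: field_simps)
    qed
    define K0 where "K0 = (\<Sum>l<L1. \<bar>e l\<bar>)"
    have K0nn: "K0 \<ge> 0" unfolding K0_def by (simp add: sum_nonneg)
    have eb: "\<bar>e l\<bar> \<le> K0 + \<epsilon>/4 * real m" if "l \<le> m" for l m
    proof (cases "l < L1")
      case True
      hence "\<bar>e l\<bar> \<le> K0" unfolding K0_def by (intro member_le_sum) auto
      moreover have "\<epsilon>/4 * real m \<ge> 0" using e by simp
      ultimately show ?thesis by linarith
    next
      case False
      hence "\<bar>e l\<bar> \<le> \<epsilon>/4 * real l" using eb1 by simp
      also have "\<dots> \<le> \<epsilon>/4 * real m" using that e by simp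
      finally show ?thesis using K0nn by simp
    qed
    obtain M0 :: nat where M0: "M0 > 4 * K0 / \<epsilon>" using reals_Archimedean2 by blast
    show "\<exists>no. \<forall>m\<ge>no. norm (D m / real m - 0) < \<epsilon>"
    proof (intro exI[of _ "max 1 M0"] allI impI)
      fix m assume m: "max 1 M0 \<le> m"
      hence m1: "real m \<ge> 1" and mM: "real m \<ge> M0" by auto
      obtain j where j: "j \<le> m" "D m \<le> \<rho> * (real m - real j) - (Wm m - Wm j)" using inv by blast
      have "\<rho> * (real m - real j) - (Wm m - Wm j) = (\<rho> - \<tau>) * (real m - real j) - e m + e j"
        unfolding e_def by (simp add: algebra_simps)
      also have "\<dots> \<le> \<bar>e m\<bar> + \<bar>e j\<bar>"
      proof -
        have "(\<rho> - \<tau>) * (real m - real j) \<le> 0" using rt j by (simp add: mult_nonpos_nonneg)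
        thus ?thesis by linarith
      qed
      also have "\<dots> \<le> 2 * K0 + \<epsilon>/2 * real m" using eb[of m m] eb[OF j(1)] by simp
      finally have Dm: "D m \<le> 2 * K0 + \<epsilon>/2 * real m" using j by linarith
      have "4 * K0 / \<epsilon> < real m" using M0 mM by linarith
      hence "4 * K0 < \<epsilon> * real m" using e by (simp add: field_simps)
      hence "D m < \<epsilon> * real m" using Dm by linarith
      hence "D m / real m < \<epsilon>" using m1 by (simp add: field_simps)
      thus "norm (D m / real m - 0) < \<epsilon>" using Dnn[of m] m1 by simp
    qed
  qed
  have "(\<lambda>m. \<rho> - D m / real m) \<longlonglongrightarrow> \<rho> - 0" by (intro tendsto_intros Dlim)
  hence lim1: "(\<lambda>m. \<rho> - D m / real m) \<longlonglongrightarrow> \<rho>" by simp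
  have ev: "\<forall>\<^sub>F m in sequentially. \<rho> - D m / real m = (\<Sum>i=1..m. s i) / real m"
    using eventually_ge_at_top[of "1::nat"]
    by eventually_elim (subst ssum, simp add: field_simps)
  have "has_rate s \<rho>" unfolding has_rate_def by (rule Lim_transform_eventually[OF lim1 ev])
  thus ?thesis using sb by blast
qed


context wl begin

lemma log_floor_ge:
  assumes x: "r \<ge> 0" shows "log 2 (real (num_msgs n r)) \<ge> real n * r - 1"
proof -
  let ?y = "2 powr (real n * r)"
  have gt: "real (num_msgs n r) > ?y - 1" by (rule num_msgs_gt[OF x])
  have ge1: "real (num_msgs n r) \<ge> 1" using num_msgs_ge1[OF x, of n] by simp
  have "real (num_msgs n r) \<ge> ?y / 2" using gt ge1 by linarith
  moreover have "?y / 2 = 2 powr (real n * r - 1)" by (simp add: powr_diff)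
  ultimately have "2 powr (real n * r - 1) \<le> real (num_msgs n r)" by simp
  thus ?thesis using ge1 by (simp add: le_log_iff)
qed

lemma keyK:
  assumes n0: "n0 \<ge> \<beta>" "n0 \<ge> 1" and e: "\<epsilon> > 0" and N: "N \<ge> n0 + \<beta>"
  shows "real (N div (n0+\<beta>)) * (real n0 * (f n0 - \<epsilon>) - 1) / real N \<le> f N"
proof -
  have N1: "N \<ge> 1" using N n0 by simp
  obtain R E D r' where r': "f n0 - \<epsilon> < r'" and ic: "is_code n0 R E D"
    and co: "constrained n0 1 \<beta> p R E" and hr: "has_rate R r'"
    using link2[OF n0(2), of "f n0 - \<epsilon>"] e by auto
  define M where "M = (\<lambda>i. num_msgs n0 (R i))"
  have R0: "\<And>i. i \<ge> 1 \<Longrightarrow> R i \<ge> 0" using ic unfolding is_code_def by auto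
  have sg: "sgood n0 M" unfolding sgood_def M_def
    using num_msgs_ge1 R0 code_dec[OF ic] wcon_scon[OF n0(1) code_wcon[OF co]] by blast
  define k where "k = N div (n0+\<beta>)"
  have sgN: "sgood N (\<lambda>i. M i ^ k)" unfolding k_def by (rule pad_good[OF sg N])
  then obtain E' D' where d': "dec N (\<lambda>i. M i ^ k) E' D'" and c': "scon N (\<lambda>i. M i ^ k) E'"
    unfolding sgood_def by blast
  define t where "t = (\<lambda>i. real k * log 2 (real (M i)) / real N)"
  define w where "w = (\<lambda>i. real k * (real n0 * R i - 1) / real N)"
  define \<tau> where "\<tau> = real k * (real n0 * r' - 1) / real N"
  have M1: "\<And>i. i \<ge> 1 \<Longrightarrow> real (M i) \<ge> 1" using num_msgs_ge1 R0 unfolding M_def by fastforce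
  have t0: "0 \<le> t i" if i: "i \<ge> 1" for i
  proof -
    have "log 2 (real (M i)) \<ge> 0" using M1[OF i] by simp
    thus ?thesis unfolding t_def by simp
  qed
  have wt: "\<And>i. i \<ge> 1 \<Longrightarrow> w i \<le> t i" unfolding t_def w_def M_def
    using log_floor_ge R0 N1 by (intro divide_right_mono mult_left_mono) auto
  have Wlim: "(\<lambda>m. (\<Sum>i=1..m. w i) / real m) \<longlonglongrightarrow> \<tau>"
  proof -
    have "(\<lambda>m. real k * real n0 / real N * ((\<Sum>i=1..m. R i) / real m) - real k / real N) \<longlonglongrightarrow>
          real k * real n0 / real N * r' - real k / real N"
      using hr unfolding has_rate_def by (intro tendsto_intros)
    moreover have "\<forall>\<^sub>F m in sequentially. real k * real n0 / real N * ((\<Sum>i=1..m. R i) / real m) - real k / real N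
                 = (\<Sum>i=1..m. w i) / real m"
      using eventually_ge_at_top[of "1::nat"]
    proof eventually_elim
      case (elim m)
      have "(\<Sum>i=1..m. w i) = real k * real n0 / real N * (\<Sum>i=1..m. R i) - real k / real N * real m"
      proof -
        have wi: "w i = real k * real n0 / real N * R i - real k / real N" for i
          unfolding w_def by (simp add: diff_divide_distrib algebra_simps)
        show ?thesis unfolding wi by (simp add: sum_subtractf sum_distrib_left)
      qed
      thus ?case using elim by (simp add: field_simps)
    qed
    ultimately have "(\<lambda>m. (\<Sum>i=1..m. w i) / real m) \<longlonglongrightarrow> real k * real n0 / real N * r' - real k / real N"
      by (rule Lim_transform_eventually)
    moreover have "real k * real n0 / real N * r' - real k / real N = \<tau>"
      unfolding \<tau>_def by (simp add: diff_divide_distrib algebra_simps)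
    ultimately show ?thesis by simp
  qed
  have T\<tau>: "real k * (real n0 * (f n0 - \<epsilon>) - 1) / real N \<le> \<tau>"
    unfolding \<tau>_def using r' N1 by (intro divide_right_mono mult_left_mono diff_right_mono) auto
  show ?thesis
  proof (cases "\<tau> < 0")
    case True
    thus ?thesis using T\<tau> f_ge0[OF N1] unfolding k_def by linarith
  next
    case False
    obtain s where s: "\<forall>i\<ge>1. 0 \<le> s i \<and> s i \<le> t i" and hs: "has_rate s \<tau>"
      using lindley[OF t0 wt Wlim, of \<tau>] False by auto
    have "\<tau> \<le> f N"
    proof (rule link1[OF N1 d' scon_wcon[OF c'] _ hs])
      fix i :: nat assume i: "i \<ge> 1"
      have "real (num_msgs N (s i)) \<le> 2 powr (real N * s i)" by (rule num_msgs_le)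
      also have "\<dots> \<le> 2 powr (real N * t i)" using s i N1 by simp
      also have "real N * t i = real k * log 2 (real (M i))" unfolding t_def using N1 by simp
      also have "2 powr (real k * log 2 (real (M i))) = real (M i) ^ k"
      proof -
        have "2 powr (real k * log 2 (real (M i))) = (2 powr (log 2 (real (M i)))) powr real k"
          by (simp add: powr_powr mult.commute)
        also have "\<dots> = real (M i) powr real k" using M1[OF i] by simp
        also have "\<dots> = real (M i) ^ k" using M1[OF i] by (simp add: powr_realpow)
        finally show ?thesis .
      qed
      finally have "real (num_msgs N (s i)) \<le> real (M i ^ k)" by simp
      thus "0 \<le> s i \<and> num_msgs N (s i) \<le> M i ^ k" using s i by (simp only: of_nat_le_iff)
    qed
    thus ?thesis using T\<tau> unfolding k_def by linarith
  qed
qed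

lemma keyK2:
  assumes n0: "n0 \<ge> \<beta> + 1" and e: "\<epsilon> > 0"
  shows "\<exists>N1. \<forall>N\<ge>N1. f n0 - (2*real \<beta>+1)/real n0 - 2*\<epsilon> \<le> f N"
proof -
  have n0': "n0 \<ge> \<beta>" "n0 \<ge> 1" using n0 bpos by auto
  define F where "F = f n0"
  have F0: "0 \<le> F" "F \<le> 2" unfolding F_def using f_ge0 f_le2 n0' by auto
  define A where "A = real n0 * (F - \<epsilon>) - 1"
  have rn: "real n0 \<ge> 1" using n0' by simp
  have dpos: "(2*real \<beta>+1)/real n0 \<ge> 1/real n0" using rn by (simp add: divide_right_mono)
  show ?thesis
  proof (cases "A \<le> 0")
    case True
    hence "F - \<epsilon> \<le> 1 / real n0" unfolding A_def using rn by (simp add: field_simps)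
    hence neg: "F - (2*real \<beta>+1)/real n0 - 2*\<epsilon> < 0" using dpos e by linarith
    show ?thesis
    proof (intro exI[of _ 1] allI impI)
      fix N :: nat assume "N \<ge> 1"
      thus "f n0 - (2*real \<beta>+1)/real n0 - 2*\<epsilon> \<le> f N" using f_ge0[of N] neg unfolding F_def by linarith
    qed
  next
    case False
    hence Apos: "A > 0" by simp
    have A2: "A \<le> 2 * real n0"
    proof -
      have "real n0 * F \<le> real n0 * 2" using F0 rn by (intro mult_left_mono) auto
      moreover have "real n0 * \<epsilon> \<ge> 0" using e rn by simp
      ultimately show ?thesis unfolding A_def by (simp add: algebra_simps)
    qed
    obtain N2 :: nat where N2: "N2 > 2 * real n0 / \<epsilon>" using reals_Archimedean2 by blast
    have main: "A / real (n0 + \<beta>) \<ge> F - (2*real \<beta>+1)/real n0 - \<epsilon>"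
    proof -
      have "real (n0+\<beta>) * (F - (2*real \<beta>+1)/real n0 - \<epsilon>)
          = real n0 * F + real \<beta> * F - (2*real \<beta>+1) * ((real n0 + real \<beta>)/real n0) - (real n0 + real \<beta>) * \<epsilon>"
        by (simp add: algebra_simps)
      also have "\<dots> \<le> real n0 * F + 2 * real \<beta> - (2*real \<beta>+1) * 1 - real n0 * \<epsilon>"
      proof -
        have "real \<beta> * F \<le> real \<beta> * 2" using F0 by (intro mult_left_mono) auto
        moreover have "(2*real \<beta>+1) * 1 \<le> (2*real \<beta>+1) * ((real n0 + real \<beta>)/real n0)"
          using rn by (intro mult_left_mono) (auto simp: field_simps)
        moreover have "real n0 * \<epsilon> \<le> (real n0 + real \<beta>) * \<epsilon>" using e by (simp add: algebra_simps)
        ultimately show ?thesis by linarith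
      qed
      also have "\<dots> = A" unfolding A_def by (simp add: algebra_simps)
      finally show ?thesis using n0' by (simp add: field_simps)
    qed
    show ?thesis
    proof (intro exI[of _ "max (n0+\<beta>) N2"] allI impI)
      fix N assume N: "max (n0+\<beta>) N2 \<le> N"
      hence Nb: "N \<ge> n0 + \<beta>" and NN2: "real N \<ge> N2" by auto
      have rN: "real N > 0" using Nb n0' by simp
      define k where "k = N div (n0+\<beta>)"
      have "N = k*(n0+\<beta>) + N mod (n0+\<beta>)" unfolding k_def by (simp only: div_mult_mod_eq)
      moreover have "N mod (n0+\<beta>) < n0+\<beta>" using n0' by simp
      ultimately have "N < (k + 1) * (n0+\<beta>)" by (simp add: algebra_simps)
      hence "real N < (real k + 1) * real (n0+\<beta>)" by (metis of_nat_1 of_nat_add of_nat_less_iff of_nat_mult)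
      hence kge: "real k \<ge> real N / real (n0+\<beta>) - 1" using n0' by (simp add: field_simps)
      have key: "real k * A / real N \<le> f N" using keyK[OF n0' e Nb] unfolding k_def A_def F_def .
      have "(real N / real (n0+\<beta>) - 1) * A / real N \<le> real k * A / real N"
        using kge Apos rN by (intro divide_right_mono mult_right_mono) auto
      moreover have "(real N / real (n0+\<beta>) - 1) * A / real N = A / real (n0+\<beta>) - A / real N"
        using rN n0' by (simp add: field_simps)
      moreover have "A / real N < \<epsilon>"
      proof -
        have "2 * real n0 / \<epsilon> < real N" using N2 NN2 by linarith
        hence "2 * real n0 < \<epsilon> * real N" using e by (simp add: field_simps)
        hence "A < \<epsilon> * real N" using A2 by linarith
        thus ?thesis using rN by (simp add: field_simps)
      qed
      ultimately show "f n0 - (2*real \<beta>+1)/real n0 - 2*\<epsilon> \<le> f N" using key main unfolding F_def by linarith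
    qed
  qed
qed

lemma f_conv: "\<exists>L. f \<longlonglongrightarrow> L"
proof -
  define g where "g = (\<lambda>n. f (Suc n))"
  obtain \<sigma> where sm: "strict_mono \<sigma>" and mono: "monoseq (\<lambda>n. g (\<sigma> n))" using seq_monosub by blast
  have "Bseq (\<lambda>n. g (\<sigma> n))"
  proof (rule BseqI'[of _ 2])
    fix n show "norm (g (\<sigma> n)) \<le> 2" unfolding g_def using f_ge0[of "Suc (\<sigma> n)"] f_le2[of "Suc (\<sigma> n)"] by simp
  qed
  then obtain L where gL: "(\<lambda>n. g (\<sigma> n)) \<longlonglongrightarrow> L" using Bseq_monoseq_convergent[OF _ mono] convergent_def by blast
  define h where "h = (\<lambda>n. Suc (\<sigma> n))"
  have fh: "(\<lambda>n. f (h n)) \<longlonglongrightarrow> L" using gL unfolding g_def h_def .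
  have hge: "h n \<ge> n" for n unfolding h_def using seq_suble[OF sm, of n] by simp
  have up: "f n \<le> L + (2*real \<beta>+1)/real n + 2*\<eta>" if n: "n \<ge> \<beta> + 1" and eta: "\<eta> > 0" for n \<eta>
  proof -
    obtain N1 where N1: "\<And>N. N \<ge> N1 \<Longrightarrow> f n - (2*real \<beta>+1)/real n - 2*\<eta> \<le> f N" using keyK2[OF n eta] by blast
    have "f n - (2*real \<beta>+1)/real n - 2*\<eta> \<le> L"
    proof (rule LIMSEQ_le_const[OF fh])
      show "\<exists>N. \<forall>m\<ge>N. f n - (2*real \<beta>+1)/real n - 2*\<eta> \<le> f (h m)"
        using N1 hge by (meson le_trans)
    qed
    thus ?thesis by linarith
  qed
  have "f \<longlonglongrightarrow> L"
  proof (rule LIMSEQ_I)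
    fix \<epsilon> :: real assume e: "\<epsilon> > 0"
    define \<eta> where "\<eta> = \<epsilon> / 8"
    have eta: "\<eta> > 0" unfolding \<eta>_def using e by simp
    obtain T0 :: nat where T0: "T0 > (2*real \<beta>+1) / \<eta>" using reals_Archimedean2 by blast
    define T where "T = max (\<beta>+1) T0"
    have T1: "T \<ge> \<beta> + 1" unfolding T_def by simp
    have dT: "(2*real \<beta>+1)/real n \<le> \<eta>" if "n \<ge> T" for n
    proof -
      have "real n \<ge> T0" using that unfolding T_def by simp
      hence "(2*real \<beta>+1) / \<eta> < real n" using T0 by linarith
      hence "2*real \<beta>+1 < \<eta> * real n" using eta by (simp add: field_simps)
      moreover have "real n > 0" using that T1 by simp
      ultimately show ?thesis by (simp add: field_simps)
    qed
    obtain k0 where k0: "\<And>k. k \<ge> k0 \<Longrightarrow> norm (f (h k) - L) < \<eta>" using LIMSEQ_D[OF fh eta] by blast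
    define k where "k = max k0 T"
    have hk: "h k \<ge> T" using hge[of k] unfolding k_def by simp
    have fhk: "f (h k) > L - \<eta>" using k0[of k] unfolding k_def by auto
    obtain N1 where N1: "\<And>N. N \<ge> N1 \<Longrightarrow> f (h k) - (2*real \<beta>+1)/real (h k) - 2*\<eta> \<le> f N"
      using keyK2[OF _ eta, of "h k"] hk T1 by (meson le_trans)
    show "\<exists>no. \<forall>n\<ge>no. norm (f n - L) < \<epsilon>"
    proof (intro exI[of _ "max N1 T"] allI impI)
      fix n assume n: "max N1 T \<le> n"
      have lo: "f n \<ge> L - 4*\<eta>" using N1[of n] n dT[OF hk] fhk by simp
      have hi: "f n \<le> L + 3*\<eta>" using up[OF _ eta, of n] n T1 dT[of n] by simp
      show "norm (f n - L) < \<epsilon>" using lo hi e unfolding \<eta>_def by simp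
    qed
  qed
  thus ?thesis by blast
qed

end


lemma sum_odd: "(\<Sum>i=1..m. if odd i then x else 0) = (x::real) * real ((m+1) div 2)"
proof (induction m)
  case 0 then show ?case by simp
next
  case (Suc m)
  have "(\<Sum>i=1..Suc m. if odd i then x else 0) = (\<Sum>i=1..m. if odd i then x else 0) + (if odd (Suc m) then x else 0)"
    by simp
  also have "\<dots> = x * real ((Suc m + 1) div 2)"
  proof (cases "odd (Suc m)")
    case True
    hence "(Suc m + 1) div 2 = (m + 1) div 2 + 1" by presburger
    thus ?thesis using Suc True by (simp add: algebra_simps)
  next
    case False
    hence "(Suc m + 1) div 2 = (m + 1) div 2" by presburger
    thus ?thesis using Suc False by simp
  qed
  finally show ?case .
qed


lemma half_lim: "(\<lambda>m. real ((m+1) div 2) / real m) \<longlonglongrightarrow> 1/2"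
proof (rule tendsto_sandwich[of "\<lambda>_. 1/2" _ _ "\<lambda>m. 1/2 + 1/2 * inverse (real m)"])
  have lo: "real m / 2 \<le> real ((m+1) div 2)" and hi: "real ((m+1) div 2) \<le> (real m + 1)/2" for m :: nat
  proof -
    have c: "m \<le> 2 * ((m+1) div 2)" and d: "2 * ((m+1) div 2) \<le> m + 1" by presburger+
    have "real m \<le> real (2 * ((m+1) div 2))" using c by (simp only: of_nat_le_iff)
    thus "real m / 2 \<le> real ((m+1) div 2)" by simp
    have "real (2 * ((m+1) div 2)) \<le> real (m + 1)" using d by (simp only: of_nat_le_iff)
    thus "real ((m+1) div 2) \<le> (real m + 1)/2" by simp
  qed
  show "\<forall>\<^sub>F m in sequentially. 1/2 \<le> real ((m+1) div 2) / real m"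
    using eventually_ge_at_top[of "1::nat"]
  proof eventually_elim
    case (elim m)
    thus ?case using lo[of m] by (simp add: field_simps)
  qed
  show "\<forall>\<^sub>F m in sequentially. real ((m+1) div 2) / real m \<le> 1/2 + 1/2 * inverse (real m)"
    using eventually_ge_at_top[of "1::nat"]
  proof eventually_elim
    case (elim m)
    thus ?case using hi[of m] by (simp add: field_simps)
  qed
  show "(\<lambda>_. 1/2) \<longlonglongrightarrow> (1/2::real)" by simp
  have "(\<lambda>m. 1/2 + 1/2 * inverse (real m)) \<longlonglongrightarrow> 1/2 + 1/2 * 0"
    by (intro tendsto_intros lim_inverse_n)
  thus "(\<lambda>m. 1/2 + 1/2 * inverse (real m)) \<longlonglongrightarrow> 1/2" by simp
qed


context wl begin

lemma wwl_win:
  assumes x: "x \<in> WWL_set N \<beta> p" and j: "j + \<beta> \<le> N"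
  shows "wcnt N (replicate N False) x j \<le> p" "wcnt N x (replicate N False) j \<le> p"
proof -
  have lx: "length x = N" and w: "length (filter id (take \<beta> (drop j x))) \<le> p"
    using x j unfolding WWL_set_def by auto
  have "{l. l < \<beta> \<and> j + l < N \<and> replicate N False ! (j + l) \<noteq> x ! (j + l)}
      = {i. i < length (take \<beta> (drop j x)) \<and> id (take \<beta> (drop j x) ! i)}"
    using lx j by auto
  hence e: "wcnt N (replicate N False) x j = length (filter id (take \<beta> (drop j x)))"
    unfolding wcnt_def length_filter_conv_card by simp
  show "wcnt N (replicate N False) x j \<le> p" using e w by simp
  have "wcnt N x (replicate N False) j = wcnt N (replicate N False) x j"
    unfolding wcnt_def by (metis (no_types) eq_commute)
  thus "wcnt N x (replicate N False) j \<le> p" using e w by simp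
qed

lemma alt_bound:
  assumes N: "N \<ge> 1"
  shows "log 2 (real (card (WWL_set N \<beta> p))) / (2 * real N) \<le> f N"
proof -
  define S where "S = WWL_set N \<beta> p"
  define c where "c = card S"
  have c1: "c \<ge> 1" unfolding c_def S_def by (rule WWL_card_pos)
  obtain hh where bij: "bij_betw hh {1..c} S" unfolding c_def S_def using ex_bij_betw_nat_finite_1[OF WWL_finite] by blast
  have inj: "inj_on hh {1..c}" and img: "hh ` {1..c} = S" using bij unfolding bij_betw_def by auto
  define E :: "nat \<Rightarrow> nat \<Rightarrow> bool list \<Rightarrow> bool list" where "E = (\<lambda>i m u. if odd i then hh m else replicate N False)"
  define D where "D = (\<lambda>(i::nat) x. if odd i then the_inv_into {1..c} hh x else 1)"
  define M where "M = (\<lambda>i::nat. if odd i then c else 1)"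
  have hS: "m \<in> {1..c} \<Longrightarrow> hh m \<in> S" for m using img by auto
  have lS: "x \<in> S \<Longrightarrow> length x = N" for x unfolding S_def WWL_set_def by auto
  have d: "dec N M E D" unfolding dec_def
  proof (intro allI impI conjI)
    fix i m and u :: "bool list" assume i: "i \<ge> 1" and mu: "m \<in> {1..M i} \<and> length u = N"
    show "length (E i m u) = N" using mu hS lS unfolding E_def M_def by (auto split: if_splits)
    show "D i (E i m u) = m" using mu inj unfolding E_def M_def D_def by (auto simp: the_inv_into_f_f)
  qed
  have w: "wcon N M E" unfolding wcon_def
  proof (intro allI impI)
    fix msg i j assume vm: "vmsg M msg" and j: "j + \<beta> \<le> N"
    have stS: "odd k \<Longrightarrow> states N E msg k \<in> S" for k
    proof -
      assume k: "odd k"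
      then obtain k' where k': "k = Suc k'" by (cases k) auto
      have "msg k \<in> {1..c}" using vm k unfolding vmsg_def M_def by (metis k' le_add1 plus_1_eq_Suc)
      thus ?thesis using k hS unfolding k' E_def by simp
    qed
    have stZ: "even k \<Longrightarrow> states N E msg k = replicate N False" for k
      by (cases k) (auto simp: E_def)
    show "wcnt N (states N E msg i) (states N E msg (Suc i)) j \<le> p"
    proof (cases "even i")
      case True
      thus ?thesis using stZ[of i] stS[of "Suc i"] wwl_win(1)[OF _ j] unfolding S_def by simp
    next
      case False
      thus ?thesis using stZ[of "Suc i"] stS[of i] wwl_win(2)[OF _ j] unfolding S_def by simp
    qed
  qed
  define x where "x = log 2 (real c) / real N"
  define R where "R = (\<lambda>i::nat. if odd i then x else 0)"
  have x0: "x \<ge> 0" unfolding x_def using c1 by simp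
  have R: "0 \<le> R i \<and> num_msgs N (R i) \<le> M i" if "i \<ge> 1" for i
  proof (cases "odd i")
    case True
    have "real N * x = log 2 (real c)" unfolding x_def using N by simp
    hence "num_msgs N x = c" unfolding num_msgs_def using c1 by simp
    thus ?thesis using True x0 unfolding R_def M_def by simp
  next
    case False
    thus ?thesis unfolding R_def M_def num_msgs_def by simp
  qed
  have hr: "has_rate R (x / 2)" unfolding has_rate_def R_def sum_odd
  proof -
    have "(\<lambda>m. x * (real ((m + 1) div 2) / real m)) \<longlonglongrightarrow> x * (1/2)" by (intro tendsto_intros half_lim)
    thus "(\<lambda>m. x * real ((m + 1) div 2) / real m) \<longlonglongrightarrow> x / 2" by simp
  qed
  have "x / 2 \<le> f N" by (rule link1[OF N d w R hr])
  thus ?thesis unfolding x_def c_def S_def by simp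
qed

end

context wl begin

lemma pb_bound:
  assumes N: "N \<ge> 1" and pb: "p \<le> \<beta>"
  shows "real p * real (N div \<beta>) / real N \<le> f N"
proof -
  define q where "q = N div \<beta>"
  define P where "P = (\<lambda>(a,b). a*\<beta>+b) ` ({..<q} \<times> {..<p})"
  have injP: "inj_on (\<lambda>(a,b). a*\<beta>+b) ({..<q} \<times> {..<p})"
  proof (rule inj_onI)
    fix u v assume u: "u \<in> {..<q} \<times> {..<p}" and v: "v \<in> {..<q} \<times> {..<p}"
      and e0: "(\<lambda>(a,b). a*\<beta>+b) u = (\<lambda>(a,b). a*\<beta>+b) v"
    obtain a b where ab: "u = (a,b)" by (cases u)
    obtain a' b' where ab': "v = (a',b')" by (cases v)
    have e: "a*\<beta>+b = a'*\<beta>+b'" using e0 ab ab' by simp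
    have bb: "b < \<beta>" "b' < \<beta>" using pb u v ab ab' by auto
    have "(a*\<beta>+b) div \<beta> = a" "(a*\<beta>+b) mod \<beta> = b" "(a'*\<beta>+b') div \<beta> = a'" "(a'*\<beta>+b') mod \<beta> = b'"
      using bb bpos by simp_all
    thus "u = v" using e ab ab' by metis
  qed
  have cardP: "card P = q * p" unfolding P_def using card_image[OF injP] by simp
  have finP: "finite P" unfolding P_def by simp
  have Pmod: "x \<in> P \<Longrightarrow> x mod \<beta> < p" for x
  proof -
    assume "x \<in> P"
    then obtain a b where "x = a*\<beta>+b" "b < p" unfolding P_def by auto
    moreover hence "b < \<beta>" using pb by simp
    ultimately show ?thesis by simp
  qed
  have PN: "x \<in> P \<Longrightarrow> x < N" for x
  proof -
    assume "x \<in> P"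
    then obtain a b where x: "x = a*\<beta>+b" "b < p" "a < q" unfolding P_def by auto
    have "a*\<beta>+b < a*\<beta>+\<beta>" using x pb by simp
    also have "\<dots> = (a+1)*\<beta>" by simp
    also have "\<dots> \<le> q*\<beta>" using x by (intro mult_right_mono) auto
    also have "\<dots> \<le> N" unfolding q_def by simp
    finally show ?thesis using x by simp
  qed
  define Q where "Q = {y :: bool list. length y = N \<and> (\<forall>i<N. y ! i \<longrightarrow> i \<in> P)}"
  have bijQ: "bij_betw (\<lambda>y. {i. i < N \<and> y ! i}) Q (Pow P)"
  proof (rule bij_betw_byWitness[where f'="\<lambda>A. map (\<lambda>i. i \<in> A) [0..<N]"])
    show "\<forall>a\<in>Q. map (\<lambda>i. i \<in> {i. i < N \<and> a ! i}) [0..<N] = a"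
      unfolding Q_def by (auto intro!: nth_equalityI)
    show "\<forall>a'\<in>Pow P. {i. i < N \<and> map (\<lambda>i. i \<in> a') [0..<N] ! i} = a'"
      using PN by auto
    show "(\<lambda>y. {i. i < N \<and> y ! i}) ` Q \<subseteq> Pow P" unfolding Q_def by auto
    show "(\<lambda>A. map (\<lambda>i. i \<in> A) [0..<N]) ` Pow P \<subseteq> Q" unfolding Q_def by auto
  qed
  have cardQ: "card Q = 2 ^ (q * p)"
    using bij_betw_same_card[OF bijQ] finP cardP by (simp add: card_Pow)
  have finQ: "finite Q" using bij_betw_finite[OF bijQ] finP by simp
  define c where "c = card Q"
  obtain hh where bij: "bij_betw hh {1..c} Q" unfolding c_def using ex_bij_betw_nat_finite_1[OF finQ] by blast
  have inj: "inj_on hh {1..c}" and img: "hh ` {1..c} = Q" using bij unfolding bij_betw_def by auto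
  have hQ: "m \<in> {1..c} \<Longrightarrow> hh m \<in> Q" for m using img by auto
  define E :: "nat \<Rightarrow> nat \<Rightarrow> bool list \<Rightarrow> bool list"
    where "E = (\<lambda>i m u. map (\<lambda>k. if k \<in> P then hh m ! k else u ! k) [0..<N])"
  define D where "D = (\<lambda>(i::nat) x. the_inv_into {1..c} hh (map (\<lambda>k. k \<in> P \<and> x ! k) [0..<N]))"
  define M where "M = (\<lambda>i::nat. c)"
  have d: "dec N M E D" unfolding dec_def
  proof (intro allI impI conjI)
    fix i m and u :: "bool list" assume i: "i \<ge> 1" and mu: "m \<in> {1..M i} \<and> length u = N"
    show "length (E i m u) = N" unfolding E_def by simp
    have hm: "hh m \<in> Q" using hQ mu unfolding M_def by simp
    have "map (\<lambda>k. k \<in> P \<and> E i m u ! k) [0..<N] = hh m"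
      using hm unfolding E_def Q_def by (auto intro!: nth_equalityI)
    thus "D i (E i m u) = m" unfolding D_def using inj mu unfolding M_def by (simp add: the_inv_into_f_f)
  qed
  have w: "wcon N M E" unfolding wcon_def
  proof (intro allI impI)
    fix msg i j assume vm: "vmsg M msg" and j: "j + \<beta> \<le> N"
    let ?x = "states N E msg i" and ?y = "states N E msg (Suc i)"
    have same: "k < N \<Longrightarrow> k \<notin> P \<Longrightarrow> ?x ! k = ?y ! k" for k by (simp add: E_def)
    have "wcnt N ?x ?y j \<le> card {..<p}" unfolding wcnt_def
    proof (rule card_inj_on_le)
      show "inj_on (\<lambda>l. (j + l) mod \<beta>) {l. l < \<beta> \<and> j + l < N \<and> ?x ! (j + l) \<noteq> ?y ! (j + l)}"
      proof (rule inj_onI)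
        fix l1 l2 assume l1: "l1 \<in> {l. l < \<beta> \<and> j + l < N \<and> ?x ! (j + l) \<noteq> ?y ! (j + l)}"
          and l2: "l2 \<in> {l. l < \<beta> \<and> j + l < N \<and> ?x ! (j + l) \<noteq> ?y ! (j + l)}"
          and e: "(j + l1) mod \<beta> = (j + l2) mod \<beta>"
        show "l1 = l2"
        proof (rule ccontr)
          assume ne: "l1 \<noteq> l2"
          show False
          proof (cases "l1 < l2")
            case True
            have "\<beta> dvd (j + l2) - (j + l1)" using mod_eq_dvd_iff_nat[of "j+l1" "j+l2" \<beta>] e True by simp
            hence "\<beta> dvd l2 - l1" by simp
            moreover have "0 < l2 - l1" "l2 - l1 < \<beta>" using True l2 by auto
            ultimately show False using nat_dvd_not_less by blast
          next
            case False
            hence lt: "l2 < l1" using ne by simp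
            have "\<beta> dvd (j + l1) - (j + l2)" using mod_eq_dvd_iff_nat[of "j+l2" "j+l1" \<beta>] e lt by simp
            hence "\<beta> dvd l1 - l2" by simp
            moreover have "0 < l1 - l2" "l1 - l2 < \<beta>" using lt l1 by auto
            ultimately show False using nat_dvd_not_less by blast
          qed
        qed
      qed
      show "(\<lambda>l. (j + l) mod \<beta>) ` {l. l < \<beta> \<and> j + l < N \<and> ?x ! (j + l) \<noteq> ?y ! (j + l)} \<subseteq> {..<p}"
      proof
        fix z assume "z \<in> (\<lambda>l. (j + l) mod \<beta>) ` {l. l < \<beta> \<and> j + l < N \<and> ?x ! (j + l) \<noteq> ?y ! (j + l)}"
        then obtain l where z: "z = (j + l) mod \<beta>" and l: "j + l < N" "?x ! (j + l) \<noteq> ?y ! (j + l)" by blast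
        have "j + l \<in> P" using same[OF l(1)] l(2) by blast
        thus "z \<in> {..<p}" using Pmod z by simp
      qed
    qed simp
    thus "wcnt N ?x ?y j \<le> p" by simp
  qed
  define x where "x = real (q * p) / real N"
  have R: "0 \<le> x \<and> num_msgs N x \<le> M i" if "i \<ge> 1" for i
  proof -
    have "real N * x = real (q * p)" unfolding x_def using N by simp
    moreover have "(2::real) powr real (q * p) = 2 ^ (q * p)" by (rule powr_realpow) simp
    ultimately have "2 powr (real N * x) = real (2 ^ (q * p))" by simp
    hence "num_msgs N x = 2 ^ (q*p)" unfolding num_msgs_def by (simp only: floor_of_nat nat_int)
    thus ?thesis unfolding M_def c_def cardQ x_def by simp
  qed
  have hr: "has_rate (\<lambda>_. x) x" unfolding has_rate_def
  proof (rule Lim_transform_eventually[OF tendsto_const])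
    show "\<forall>\<^sub>F m in sequentially. x = (\<Sum>i = 1..m. x) / real m"
      using eventually_ge_at_top[of "1::nat"] by eventually_elim simp
  qed
  have "x \<le> f N" by (rule link1[OF N d w R hr])
  thus ?thesis unfolding x_def q_def by (simp add: mult.commute)
qed

end


theorem corollary1:
  fixes \<beta> p :: nat
  assumes "0 < \<beta>" and "0 < p" and "p \<le> \<beta>"
  shows "C 1 \<beta> p \<ge> max (C_WWL \<beta> p / 2) (real p / real \<beta>)"
proof -
  interpret wl \<beta> p using assms(1) by unfold_locales
  obtain L where fL: "(\<lambda>n. C_n n 1 \<beta> p) \<longlonglongrightarrow> L" using f_conv by blast
  have CL: "C 1 \<beta> p = L" unfolding C_def using fL by (rule limI)
  have b1: "real p / real \<beta> \<le> L"
  proof (rule tendsto_le[OF _ fL])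
    have "(\<lambda>N. real p / real \<beta> - real p * inverse (real N)) \<longlonglongrightarrow> real p / real \<beta> - real p * 0"
      by (intro tendsto_intros lim_inverse_n)
    thus "(\<lambda>N. real p / real \<beta> - real p * inverse (real N)) \<longlonglongrightarrow> real p / real \<beta>" by simp
    show "\<forall>\<^sub>F N in sequentially. real p / real \<beta> - real p * inverse (real N) \<le> C_n N 1 \<beta> p"
      using eventually_ge_at_top[of "1::nat"]
    proof eventually_elim
      case (elim N)
      have rb: "real \<beta> > 0" using assms by simp
      have "N < (N div \<beta> + 1) * \<beta>"
      proof -
        have a: "N = N div \<beta> * \<beta> + N mod \<beta>" by (simp only: div_mult_mod_eq)
        have b: "N mod \<beta> < \<beta>" using assms by simp
        from a b have "N < N div \<beta> * \<beta> + \<beta>" by linarith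
        thus ?thesis by simp
      qed
      hence "real N < (real (N div \<beta>) + 1) * real \<beta>" by (metis of_nat_1 of_nat_add of_nat_less_iff of_nat_mult)
      hence kge: "real N / real \<beta> - 1 \<le> real (N div \<beta>)" using rb by (simp add: field_simps)
      have rN: "real N > 0" using elim by simp
      have "real p / real \<beta> - real p * inverse (real N) = real p * (real N / real \<beta> - 1) / real N"
        using rN rb by (simp add: field_simps)
      also have "\<dots> \<le> real p * real (N div \<beta>) / real N"
        using kge rN by (intro divide_right_mono mult_left_mono) auto
      also have "\<dots> \<le> C_n N 1 \<beta> p" by (rule pb_bound[OF elim assms(3)])
      finally show ?case .
    qed
  qed simp
  have b2: "C_WWL \<beta> p / 2 \<le> L"
  proof (rule tendsto_le[OF _ fL])
    show "(\<lambda>N. log 2 (real (card (WWL_set N \<beta> p))) / real N / 2) \<longlonglongrightarrow> C_WWL \<beta> p / 2"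
      using tendsto_divide[OF WWL_conv tendsto_const[of "2::real"]] by simp
    show "\<forall>\<^sub>F N in sequentially. log 2 (real (card (WWL_set N \<beta> p))) / real N / 2 \<le> C_n N 1 \<beta> p"
      using eventually_ge_at_top[of "1::nat"]
    proof eventually_elim
      case (elim N)
      thus ?case using alt_bound[OF elim] by (simp add: field_simps)
    qed
  qed simp
  show ?thesis using b1 b2 CL by simp
qed


end
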